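(* If $(\Sigma, *, \mathsf{emp})$ is a separation algebra, then $(\Sigma^+, *, \Sigma^*.\mathsf{emp})$ is a separation algebra, where for $\sigma.s, \tau.t\in\Sigma^+$ the product $\sigma.s * \tau.t$ is defined iff $\sigma=\tau$ and $s * t$ is defined, in which case $\sigma.s*\tau.t=\sigma.(s*t)$.
   Context: A separation algebra $(\Sigma,*,\mathsf{emp})$ is a partial commutative monoid with a set of units $\mathsf{emp}\subseteq\Sigma$ such that (i) every $s\in\Sigma$ has a unit $1\in\mathsf{emp}$ with $s*1=s$, and (ii) $1*1'$ is undefined for any two distinct units $1,1'\in\mathsf{emp}$. $\Sigma^+$ denotes nonempty finite sequences over $\Sigma$, $\Sigma^*$ all finite sequences, and $\sigma.s$ denotes the sequence $\sigma$ followed by $s$. *)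

theory Defs
  imports Main
begin

text \<open>A partial binary operation on a carrier S is modelled as a total function
  into option (None = undefined).  A separation algebra (S, f, E) is a partial
  commutative monoid with a set of units E.\<close>

definition sep_algebra :: "'a set \<Rightarrow> ('a \<Rightarrow> 'a \<Rightarrow> 'a option) \<Rightarrow> 'a set \<Rightarrow> bool" where
  "sep_algebra S f E \<longleftrightarrow>
     E \<subseteq> S \<and>
     (\<forall>x\<in>S. \<forall>y\<in>S. \<forall>z. f x y = Some z \<longrightarrow> z \<in> S) \<and>
     (\<forall>x\<in>S. \<forall>y\<in>S. f x y = f y x) \<and>
     (\<forall>x\<in>S. \<forall>y\<in>S. \<forall>z\<in>S.
        Option.bind (f x y) (\<lambda>a. f a z) = Option.bind (f y z) (\<lambda>b. f x b)) \<and>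
     (\<forall>e\<in>E. \<forall>x\<in>S. \<forall>z. f x e = Some z \<longrightarrow> z = x) \<and>
     (\<forall>x\<in>S. \<exists>e\<in>E. f x e = Some x) \<and>
     (\<forall>e\<in>E. \<forall>e'\<in>E. e \<noteq> e' \<longrightarrow> f e e' = None)"

text \<open>Lifting to nonempty sequences: a sequence sigma.s is the list sigma @ [s].
  sigma.s * tau.t is defined iff sigma = tau and s * t is defined, and then
  equals sigma.(s*t).\<close>

definition seq_op :: "('a \<Rightarrow> 'a \<Rightarrow> 'a option) \<Rightarrow> 'a list \<Rightarrow> 'a list \<Rightarrow> 'a list option" where
  "seq_op f xs ys =
     (if xs \<noteq> [] \<and> ys \<noteq> [] \<and> butlast xs = butlast ys
      then map_option (\<lambda>z. butlast xs @ [z]) (f (last xs) (last ys))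
      else None)"

end

theory Submission
  imports Defs
begin

lemma seq_op_snoc:
  "seq_op f (a@[x]) (b@[y]) = (if a = b then map_option (\<lambda>z. a@[z]) (f x y) else None)"
  by (simp add: seq_op_def)

lemma nonempty_snoc: "xs \<noteq> [] \<Longrightarrow> \<exists>a x. xs = a @ [x]"
  by (metis append_butlast_last_id)

theorem lemma3p1:
  assumes "sep_algebra S f E"
  shows "sep_algebra {xs. xs \<noteq> [] \<and> set xs \<subseteq> S} (seq_op f)
           {\<sigma> @ [e] | \<sigma> e. set \<sigma> \<subseteq> S \<and> e \<in> E}"
proof -
  note A = assms[unfolded sep_algebra_def]
  have ES: "E \<subseteq> S" and cl: "\<And>x y z. x\<in>S \<Longrightarrow> y\<in>S \<Longrightarrow> f x y = Some z \<Longrightarrow> z \<in> S"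
    and cm: "\<And>x y. x\<in>S \<Longrightarrow> y\<in>S \<Longrightarrow> f x y = f y x"
    and as: "\<And>x y z. x\<in>S \<Longrightarrow> y\<in>S \<Longrightarrow> z\<in>S \<Longrightarrow>
        Option.bind (f x y) (\<lambda>a. f a z) = Option.bind (f y z) (\<lambda>b. f x b)"
    and un: "\<And>e x z. e\<in>E \<Longrightarrow> x\<in>S \<Longrightarrow> f x e = Some z \<Longrightarrow> z = x"
    and ex: "\<And>x. x\<in>S \<Longrightarrow> \<exists>e\<in>E. f x e = Some x"
    and dis: "\<And>e e'. e\<in>E \<Longrightarrow> e'\<in>E \<Longrightarrow> e \<noteq> e' \<Longrightarrow> f e e' = None"
    using A by blast+
  let ?S = "{xs. xs \<noteq> [] \<and> set xs \<subseteq> S}"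
  let ?E = "{\<sigma> @ [e] | \<sigma> e. set \<sigma> \<subseteq> S \<and> e \<in> E}"
  have dec: "\<And>xs. xs \<in> ?S \<Longrightarrow> \<exists>a x. xs = a @ [x] \<and> set a \<subseteq> S \<and> x \<in> S"
    using nonempty_snoc by fastforce
  have 1: "?E \<subseteq> ?S" using ES by auto
  have 2: "\<forall>x\<in>?S. \<forall>y\<in>?S. \<forall>z. seq_op f x y = Some z \<longrightarrow> z \<in> ?S"
  proof (intro ballI allI impI)
    fix xs ys z assume xs: "xs \<in> ?S" and ys: "ys \<in> ?S" and h: "seq_op f xs ys = Some z"
    obtain a p where X: "xs = a@[p]" "set a \<subseteq> S" "p \<in> S" using dec[OF xs] by blast
    obtain b q where Y: "ys = b@[q]" "set b \<subseteq> S" "q \<in> S" using dec[OF ys] by blast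
    have h2: "(if a = b then map_option (\<lambda>w. a@[w]) (f p q) else None) = Some z"
      using h unfolding X Y seq_op_snoc .
    then have ab: "a = b" by (cases "a = b") simp_all
    with h2 obtain w where w: "f p q = Some w" "z = a@[w]" by (cases "f p q") simp_all
    have "w \<in> S" using cl[OF X(3) Y(3) w(1)] .
    then show "z \<in> ?S" using w(2) X(2) by simp
  qed
  have 3: "\<forall>x\<in>?S. \<forall>y\<in>?S. seq_op f x y = seq_op f y x"
  proof (intro ballI)
    fix xs ys assume xs: "xs \<in> ?S" and ys: "ys \<in> ?S"
    obtain a p where X: "xs = a@[p]" "set a \<subseteq> S" "p \<in> S" using dec[OF xs] by blast
    obtain b q where Y: "ys = b@[q]" "set b \<subseteq> S" "q \<in> S" using dec[OF ys] by blast
    have c: "f p q = f q p" using cm[OF X(3) Y(3)] .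
    show "seq_op f xs ys = seq_op f ys xs" unfolding X Y seq_op_snoc c by auto
  qed
  have 4: "\<forall>x\<in>?S. \<forall>y\<in>?S. \<forall>z\<in>?S.
        Option.bind (seq_op f x y) (\<lambda>a. seq_op f a z) = Option.bind (seq_op f y z) (\<lambda>b. seq_op f x b)"
  proof (intro ballI)
    fix xs ys zs assume xs: "xs \<in> ?S" and ys: "ys \<in> ?S" and zs: "zs \<in> ?S"
    obtain a p where X: "xs = a@[p]" "set a \<subseteq> S" "p \<in> S" using dec[OF xs] by blast
    obtain b q where Y: "ys = b@[q]" "set b \<subseteq> S" "q \<in> S" using dec[OF ys] by blast
    obtain c r where Z: "zs = c@[r]" "set c \<subseteq> S" "r \<in> S" using dec[OF zs] by blast
    have asc: "Option.bind (f p q) (\<lambda>w. f w r) = Option.bind (f q r) (\<lambda>w. f p w)"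
      using as[OF X(3) Y(3) Z(3)] .
    show "Option.bind (seq_op f xs ys) (\<lambda>a. seq_op f a zs) = Option.bind (seq_op f ys zs) (\<lambda>b. seq_op f xs b)"
    proof (cases "a = b \<and> b = c")
      case True
      then have ab: "a = b" "b = c" by auto
      have L: "Option.bind (seq_op f xs ys) (\<lambda>a. seq_op f a zs) = map_option (\<lambda>w. a@[w]) (Option.bind (f p q) (\<lambda>w. f w r))"
        unfolding X Y Z ab by (cases "f p q") (simp_all add: seq_op_snoc)
      have R: "Option.bind (seq_op f ys zs) (\<lambda>b. seq_op f xs b) = map_option (\<lambda>w. a@[w]) (Option.bind (f q r) (\<lambda>w. f p w))"
        unfolding X Y Z ab by (cases "f q r") (simp_all add: seq_op_snoc)
      show ?thesis unfolding L R asc ..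
    next
      case False
      then consider "a \<noteq> b" | "a = b" "b \<noteq> c" by blast
      then show ?thesis
      proof cases
        case 1
        have L: "seq_op f xs ys = None" unfolding X Y seq_op_snoc using 1 by simp
        have R: "Option.bind (seq_op f ys zs) (\<lambda>b. seq_op f xs b) = None"
          unfolding X Y Z using 1 by (cases "f q r") (auto simp add: seq_op_snoc)
        show ?thesis using L R by simp
      next
        case 2
        have R: "seq_op f ys zs = None" unfolding Y Z seq_op_snoc using 2 by simp
        have L: "Option.bind (seq_op f xs ys) (\<lambda>a. seq_op f a zs) = None"
          unfolding X Y Z using 2 by (cases "f p q") (simp_all add: seq_op_snoc)
        show ?thesis using L R by simp
      qed
    qed
  qed
  have 5: "\<forall>e\<in>?E. \<forall>x\<in>?S. \<forall>z. seq_op f x e = Some z \<longrightarrow> z = x"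
  proof (intro ballI allI impI)
    fix es xs z assume es: "es \<in> ?E" and xs: "xs \<in> ?S" and h: "seq_op f xs es = Some z"
    obtain a p where X: "xs = a@[p]" "set a \<subseteq> S" "p \<in> S" using dec[OF xs] by blast
    from es obtain b e where E: "es = b@[e]" "e \<in> E" by blast
    have h2: "(if a = b then map_option (\<lambda>w. a@[w]) (f p e) else None) = Some z"
      using h unfolding X E seq_op_snoc .
    then have ab: "a = b" by (cases "a = b") simp_all
    with h2 obtain w where w: "f p e = Some w" "z = a@[w]" by (cases "f p e") simp_all
    have "w = p" using un[OF E(2) X(3) w(1)] .
    then show "z = xs" using w(2) X(1) by simp
  qed
  have 6: "\<forall>x\<in>?S. \<exists>e\<in>?E. seq_op f x e = Some x"
  proof
    fix xs assume xs: "xs \<in> ?S"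
    obtain a x where X: "xs = a@[x]" "set a \<subseteq> S" "x \<in> S" using dec[OF xs] by blast
    obtain e where e: "e \<in> E" "f x e = Some x" using ex[OF X(3)] by blast
    have "a@[e] \<in> ?E" using X(2) e(1) by blast
    moreover have "seq_op f xs (a@[e]) = Some xs" unfolding X(1) seq_op_snoc using e(2) by simp
    ultimately show "\<exists>e\<in>?E. seq_op f xs e = Some xs" by blast
  qed
  have 7: "\<forall>e\<in>?E. \<forall>e'\<in>?E. e \<noteq> e' \<longrightarrow> seq_op f e e' = None"
  proof (intro ballI impI)
    fix es es' assume es: "es \<in> ?E" and es': "es' \<in> ?E" and ne: "es \<noteq> es'"
    from es obtain a e where A1: "es = a@[e]" "e \<in> E" by blast
    from es' obtain b e' where B1: "es' = b@[e']" "e' \<in> E" by blast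
    show "seq_op f es es' = None"
    proof (cases "a = b")
      case True
      then have "e \<noteq> e'" using ne A1 B1 by simp
      then have "f e e' = None" using dis[OF A1(2) B1(2)] by simp
      then show ?thesis unfolding A1 B1 seq_op_snoc by simp
    next
      case False
      then show ?thesis unfolding A1 B1 seq_op_snoc by simp
    qed
  qed
  show ?thesis unfolding sep_algebra_def using 1 2 3 4 5 6 7 by (intro conjI)
qed

end
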